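(* Let $\sigma:\mathbb{R}\to\mathbb{R}$ be bounded and differentiable with bounded derivative. Let $d_1,d_2,\kappa,L,n,K_n\in\mathbb{N}$ with $\kappa\le\min\{d_1,d_2\}$ and $L\ge2$, and consider the network $f_{\mathbf{w}}$ described in the context with architecture $M_1=M_{L+1}=\kappa$, $M_2=\dots=M_L=1$, $k_1=\dots=k_{L-1}=2\kappa^2$, $k_0=k_L=1$. Let $(\mathbf{X}_1,Y_1),\dots,(\mathbf{X}_n,Y_n)\in[0,1]^{D}\times\{0,1\}$, let $c_4>0$, and define $$F_n(\mathbf{w})=\frac1n\sum_{i=1}^n|Y_i-f_{\mathbf{w}}(\mathbf{X}_i)|^2+c_4\sum_{k=1}^{K_n}w_k^2 .$$ Let $t_n,L_n>0$ with $t_n\ge L_n$, let $\gamma_n^*\ge1$, $B_n\ge1$, and let $\mathbf{w},\mathbf{v}$ be weight vectors such that $|w_k|\le\gamma_n^*$ for $k=1,\dots,K_n$, $|w^{(r)}_{s_2,k}|\le B_n$ and $|w^{(r)}_{t_1,t_2,s_1,s_2,k}|\le B_n$ for all indices with $r=2,\dots,L$, and $$\|\mathbf{w}-\mathbf{v}\|_\infty^2\le\frac{2t_n}{L_n}\max\{F_n(\mathbf{v}),1\}.$$ Then $$\|(\nabla_{\mathbf{w}}F_n)(\mathbf{w})\|\le c_8\cdot K_n^{3/2}\cdot B_n^{2L}\cdot(\gamma_n^* )^2\cdot\sqrt{\frac{t_n}{L_n}\max\{F_n(\mathbf{v}),1\}},$$ where $c_8>0$ is a constant not depending on $n$, $K_n$,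 $B_n$, $\gamma_n^*$, $t_n$, $L_n$, $\mathbf{w}$, $\mathbf{v}$ or the data.
   Context: $D=\{1,\dots,d_1\}\times\{1,\dots,d_2\}$ and $[0,1]^D$ is the set of families $(x_{i,j})_{(i,j)\in D}$ with entries in $[0,1]$. Network: for $k\in\{1,\dots,K_n\}$ and $(i,j)\in D$, $o^{(0)}_{(i,j),1,k}=x_{i,j}$ and for $r=1,\dots,L$, $s_2\in\{1,\dots,k_r\}$, $$o^{(r)}_{(i,j),s_2,k}=\sigma\Big(\sum_{s_1=1}^{k_{r-1}}\sum_{t_1,t_2\in\{1,\dots,M_r\},\,(i+t_1-1,j+t_2-1)\in D} w^{(r)}_{t_1,t_2,s_1,s_2,k}\, o^{(r-1)}_{(i+t_1-1,j+t_2-1),s_1,k}+w^{(r)}_{s_2,k}\Big),$$ $f_{\mathbf{w}_k,\mathbf{w}_{bias,k}}(\mathbf{x})=\frac{1}{(d_1-M_{L+1}+1)(d_2-M_{L+1}+1)}\sum_{i=1}^{d_1-M_{L+1}+1}\sum_{j=1}^{d_2-M_{L+1}+1}o^{(L)}_{(i,j),1,k}$, and $f_{\mathbf{w}}(\mathbf{x})=\sum_{k=1}^{K_n}w_kf_{\mathbf{w}_k,\mathbf{w}_{bias,k}}(\mathbf{x})$. The weight vector $\mathbf{w}$ collects all $w_k$, $w^{(r)}_{t_1,t_2,s_1,s_2,k}$, $w^{(r)}_{s_2,k}$; $\nabla_{\mathbf{w}}$ is the gradient with respect to all these components, $\|\cdot\|$ the Euclidean norm and $\|\cdot\|_\infty$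 the maximum of absolute values of components. *)

theory Defs
  imports "HOL-Analysis.Analysis"
begin

text \<open>Indices of the weight vector: outer weights w_k, convolution weights
  w^(r)_{t1,t2,s1,s2,k} and bias weights w^(r)_{s2,k}.\<close>
datatype widx = Outer nat | Conv nat nat nat nat nat nat | Bias nat nat nat

definition pix :: "nat \<Rightarrow> nat \<Rightarrow> (nat \<times> nat) set" where
  "pix d1 d2 = {1..d1} \<times> {1..d2}"

text \<open>Outputs o^(r)_{p,s,k} of the k-th convolutional network; M r is the filter
  size of layer r, kc r the number of channels of layer r.\<close>
primrec cnn_o :: "(real \<Rightarrow> real) \<Rightarrow> nat \<Rightarrow> nat \<Rightarrow> (nat \<Rightarrow> nat) \<Rightarrow> (nat \<Rightarrow> nat)
    \<Rightarrow> (widx \<Rightarrow> real) \<Rightarrow> nat \<Rightarrow> (nat \<times> nat \<Rightarrow> real) \<Rightarrow> nat \<Rightarrow> nat \<times> nat \<Rightarrow> nat \<Rightarrow> real" where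
  "cnn_o \<sigma> d1 d2 M kc w k x 0 p s = x p"
| "cnn_o \<sigma> d1 d2 M kc w k x (Suc r) p s2 =
     \<sigma> ((\<Sum>s1\<in>{1..kc r}. \<Sum>t1\<in>{1..M (Suc r)}. \<Sum>t2\<in>{1..M (Suc r)}.
            (if (fst p + t1 - 1, snd p + t2 - 1) \<in> pix d1 d2
             then w (Conv (Suc r) t1 t2 s1 s2 k) *
                  cnn_o \<sigma> d1 d2 M kc w k x r (fst p + t1 - 1, snd p + t2 - 1) s1
             else 0))
        + w (Bias (Suc r) s2 k))"

definition cnn_fk :: "(real \<Rightarrow> real) \<Rightarrow> nat \<Rightarrow> nat \<Rightarrow> nat \<Rightarrow> (nat \<Rightarrow> nat) \<Rightarrow> (nat \<Rightarrow> nat)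
    \<Rightarrow> (widx \<Rightarrow> real) \<Rightarrow> nat \<Rightarrow> (nat \<times> nat \<Rightarrow> real) \<Rightarrow> real" where
  "cnn_fk \<sigma> d1 d2 L M kc w k x =
     (1 / (real (d1 - M (L+1) + 1) * real (d2 - M (L+1) + 1))) *
     (\<Sum>i\<in>{1..d1 - M (L+1) + 1}. \<Sum>j\<in>{1..d2 - M (L+1) + 1}.
        cnn_o \<sigma> d1 d2 M kc w k x L (i, j) 1)"

definition cnn_f :: "(real \<Rightarrow> real) \<Rightarrow> nat \<Rightarrow> nat \<Rightarrow> nat \<Rightarrow> (nat \<Rightarrow> nat) \<Rightarrow> (nat \<Rightarrow> nat)
    \<Rightarrow> nat \<Rightarrow> (widx \<Rightarrow> real) \<Rightarrow> (nat \<times> nat \<Rightarrow> real) \<Rightarrow> real" where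
  "cnn_f \<sigma> d1 d2 L M kc K w x = (\<Sum>k\<in>{1..K}. w (Outer k) * cnn_fk \<sigma> d1 d2 L M kc w k x)"

definition weight_idx :: "nat \<Rightarrow> (nat \<Rightarrow> nat) \<Rightarrow> (nat \<Rightarrow> nat) \<Rightarrow> nat \<Rightarrow> widx set" where
  "weight_idx L M kc K =
     {Outer k | k. k \<in> {1..K}} \<union>
     {Conv r t1 t2 s1 s2 k | r t1 t2 s1 s2 k. r \<in> {1..L} \<and> t1 \<in> {1..M r} \<and> t2 \<in> {1..M r}
         \<and> s1 \<in> {1..kc (r - 1)} \<and> s2 \<in> {1..kc r} \<and> k \<in> {1..K}} \<union>
     {Bias r s2 k | r s2 k. r \<in> {1..L} \<and> s2 \<in> {1..kc r} \<and> k \<in> {1..K}}"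

definition arch_M :: "nat \<Rightarrow> nat \<Rightarrow> nat \<Rightarrow> nat" where
  "arch_M \<kappa> L r = (if r = 1 \<or> r = L + 1 then \<kappa> else 1)"

definition arch_k :: "nat \<Rightarrow> nat \<Rightarrow> nat \<Rightarrow> nat" where
  "arch_k \<kappa> L r = (if r = 0 \<or> r = L then 1 else 2 * \<kappa>^2)"

definition Fn :: "(real \<Rightarrow> real) \<Rightarrow> nat \<Rightarrow> nat \<Rightarrow> nat \<Rightarrow> (nat \<Rightarrow> nat) \<Rightarrow> (nat \<Rightarrow> nat)
    \<Rightarrow> nat \<Rightarrow> nat \<Rightarrow> (nat \<Rightarrow> nat \<times> nat \<Rightarrow> real) \<Rightarrow> (nat \<Rightarrow> real) \<Rightarrow> real \<Rightarrow> (widx \<Rightarrow> real) \<Rightarrow> real" where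
  "Fn \<sigma> d1 d2 L M kc K n X Y c4 w =
     (1 / real n) * (\<Sum>i\<in>{1..n}. \<bar>Y i - cnn_f \<sigma> d1 d2 L M kc K w (X i)\<bar>^2)
     + c4 * (\<Sum>k\<in>{1..K}. (w (Outer k))^2)"

definition grad_norm :: "((widx \<Rightarrow> real) \<Rightarrow> real) \<Rightarrow> widx set \<Rightarrow> (widx \<Rightarrow> real) \<Rightarrow> real" where
  "grad_norm F I w = sqrt (\<Sum>i\<in>I. (deriv (\<lambda>z. F (w(i := z))) (w i))^2)"

definition sup_dist :: "widx set \<Rightarrow> (widx \<Rightarrow> real) \<Rightarrow> (widx \<Rightarrow> real) \<Rightarrow> real" where
  "sup_dist I w v = Max (insert 0 ((\<lambda>i. \<bar>w i - v i\<bar>) ` I))"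

end

theory Submission
  imports Defs
begin

lemma sigma_lip:
  fixes \<sigma> :: "real \<Rightarrow> real"
  assumes d: "\<forall>x. \<sigma> differentiable (at x)" and b: "\<forall>x. \<bar>deriv \<sigma> x\<bar> \<le> C'"
  shows "\<bar>\<sigma> a - \<sigma> b\<bar> \<le> C' * \<bar>a - b\<bar>"
proof -
  have D: "\<And>x. DERIV \<sigma> x :> deriv \<sigma> x" using d DERIV_deriv_iff_real_differentiable by blast
  have *: "\<bar>\<sigma> y - \<sigma> x\<bar> \<le> C' * \<bar>y - x\<bar>" if "x < y" for x y
  proof -
    have "\<exists>z>x. z < y \<and> \<sigma> y - \<sigma> x = (y - x) * deriv \<sigma> z" by (rule MVT2[OF that]) (rule D)
    then obtain z where "\<sigma> y - \<sigma> x = (y - x) * deriv \<sigma> z" by blast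
    then have "\<bar>\<sigma> y - \<sigma> x\<bar> = \<bar>y - x\<bar> * \<bar>deriv \<sigma> z\<bar>" by (simp add: abs_mult)
    also have "\<dots> \<le> \<bar>y - x\<bar> * C'" using b by (intro mult_left_mono) auto
    finally show ?thesis by (simp add: mult.commute)
  qed
  show ?thesis
  proof (cases a b rule: linorder_cases)
    case less then show ?thesis using *[of a b] by (simp add: abs_minus_commute)
  next
    case equal then show ?thesis using b[rule_format, of 0] by simp
  next
    case greater then show ?thesis using *[of b a] by simp
  qed
qed

lemma deriv_bound:
  fixes g :: "real \<Rightarrow> real"
  assumes "g differentiable (at x)" and "\<And>z. \<bar>z - x\<bar> \<le> 1 \<Longrightarrow> \<bar>g z - g x\<bar> \<le> M * \<bar>z - x\<bar>"
  shows "\<bar>deriv g x\<bar> \<le> M"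
proof -
  have "DERIV g x :> deriv g x" using assms(1) DERIV_deriv_iff_real_differentiable by blast
  then have L: "((\<lambda>h. (g (x + h) - g x) / h) \<longlongrightarrow> deriv g x) (at 0)" by (simp add: DERIV_def)
  then have L2: "((\<lambda>h. \<bar>(g (x + h) - g x) / h\<bar>) \<longlongrightarrow> \<bar>deriv g x\<bar>) (at 0)" by (rule tendsto_rabs)
  have ev: "eventually (\<lambda>h. \<bar>(g (x + h) - g x) / h\<bar> \<le> M) (at (0::real))"
    unfolding eventually_at
  proof (intro exI[of _ 1] conjI ballI impI)
    fix h :: real assume h: "h \<noteq> 0 \<and> dist h 0 < 1"
    then have "\<bar>g (x + h) - g x\<bar> \<le> M * \<bar>h\<bar>" using assms(2)[of "x+h"] by (simp add: dist_real_def)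
    then show "\<bar>(g (x + h) - g x) / h\<bar> \<le> M" using h by (simp add: divide_le_eq)
  qed simp
  show ?thesis by (rule tendsto_upperbound[OF L2 ev]) simp
qed

lemma sum_abs_le:
  fixes f :: "nat \<Rightarrow> real"
  assumes "\<And>a. a \<in> {1..m} \<Longrightarrow> \<bar>f a\<bar> \<le> b" "real m \<le> A" "b \<ge> 0"
  shows "\<bar>\<Sum>a\<in>{1..m}. f a\<bar> \<le> A * b"
proof -
  have "\<bar>\<Sum>a\<in>{1..m}. f a\<bar> \<le> (\<Sum>a\<in>{1..m}. \<bar>f a\<bar>)" by (rule sum_abs)
  also have "\<dots> \<le> real (card {1..m}) * b" using assms(1) sum_bounded_above by metis
  also have "\<dots> \<le> A * b" using assms by (intro mult_right_mono) auto
  finally show ?thesis .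
qed

lemma o_bound:
  assumes sb: "\<And>a. \<bar>\<sigma> a\<bar> \<le> C" and C1: "C \<ge> 1"
    and xb: "\<And>p. p \<in> pix d1 d2 \<Longrightarrow> \<bar>x p\<bar> \<le> 1"
    and "r \<ge> 1 \<or> p \<in> pix d1 d2"
  shows "\<bar>cnn_o \<sigma> d1 d2 M kc w k x r p s\<bar> \<le> C"
proof (cases r)
  case 0
  then have "p \<in> pix d1 d2" using assms(4) by simp
  then show ?thesis using 0 xb[of p] C1 by simp
next
  case (Suc r') then show ?thesis using sb by simp
qed

lemma o_cong:
  assumes "\<And>r t1 t2 s1 s2. w (Conv r t1 t2 s1 s2 k) = w' (Conv r t1 t2 s1 s2 k)"
    and "\<And>r s. w (Bias r s k) = w' (Bias r s k)"
  shows "cnn_o \<sigma> d1 d2 M kc w k x r p s = cnn_o \<sigma> d1 d2 M kc w' k x r p s"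
  by (induction r arbitrary: p s) (simp_all add: assms cong: if_cong)

lemma o_diff:
  assumes d: "\<forall>x. \<sigma> differentiable (at x)"
  shows "(\<lambda>z. cnn_o \<sigma> d1 d2 M kc (w(i:=z)) k x r p s) differentiable (at z0)"
proof (induction r arbitrary: p s)
  case 0 then show ?case by simp
next
  case (Suc r)
  have u: "(\<lambda>z. (w(i:=z)) j) differentiable (at z0)" for j
    by (cases "j = i") auto
  have u': "(\<lambda>z. if j = i then z else w j) differentiable (at z0)" for j
    by (cases "j = i") auto
  have inner: "(\<lambda>z. (\<Sum>s1\<in>{1..kc r}. \<Sum>t1\<in>{1..M (Suc r)}. \<Sum>t2\<in>{1..M (Suc r)}.
            (if (fst p + t1 - 1, snd p + t2 - 1) \<in> pix d1 d2
             then (w(i:=z)) (Conv (Suc r) t1 t2 s1 s2 k) *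
                  cnn_o \<sigma> d1 d2 M kc (w(i:=z)) k x r (fst p + t1 - 1, snd p + t2 - 1) s1
             else 0))
        + (w(i:=z)) (Bias (Suc r) s2 k)) differentiable (at z0)" for s2
  proof -
    have t: "(\<lambda>z. if c then (w(i:=z)) j * cnn_o \<sigma> d1 d2 M kc (w(i:=z)) k x r q s1 else 0) differentiable (at z0)"
      for c j q s1
      by (cases c) (auto intro!: differentiable_mult u u' Suc)
    show ?thesis
      by (intro differentiable_add differentiable_sum u ballI finite_atLeastAtMost t)
  qed
  show ?case
    by (simp only: cnn_o.simps) (rule differentiable_compose[where f=\<sigma>, OF d[rule_format] inner])
qed

lemma upd_diff: fixes w :: "'a \<Rightarrow> real" shows "\<bar>(w(i:=z)) j - w j\<bar> \<le> \<bar>z - w i\<bar>"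
  by (cases "j = i") auto

lemma o_lip:
  fixes \<sigma> :: "real \<Rightarrow> real"
  assumes slip: "\<And>a b. \<bar>\<sigma> a - \<sigma> b\<bar> \<le> C' * \<bar>a - b\<bar>"
    and sb: "\<And>a. \<bar>\<sigma> a\<bar> \<le> C" and C1: "C \<ge> 1"
    and xb: "\<And>p. p \<in> pix d1 d2 \<Longrightarrow> \<bar>x p\<bar> \<le> 1"
    and Mb: "\<And>r. M r \<le> A2" and kb: "\<And>r. kc r \<le> A1"
    and wb: "\<And>r t1 t2 s1 s2. r \<in> {2..L} \<Longrightarrow> s2 \<in> {1..kc r} \<Longrightarrow> s1 \<in> {1..kc (r-1)}
       \<Longrightarrow> t1 \<in> {1..M r} \<Longrightarrow> t2 \<in> {1..M r} \<Longrightarrow> \<bar>w (Conv r t1 t2 s1 s2 k)\<bar> \<le> B"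
    and B1: "B \<ge> 1" and dz: "\<bar>z - w i\<bar> \<le> 1"
    and G1: "G \<ge> 1" and G2: "G \<ge> C' * (real (A1*A2^2) * (2 + C) + 1)"
  shows "r \<le> L \<Longrightarrow> s \<in> {1..kc r} \<Longrightarrow>
    \<bar>cnn_o \<sigma> d1 d2 M kc (w(i:=z)) k x r p s - cnn_o \<sigma> d1 d2 M kc w k x r p s\<bar> \<le> (G*B)^r * \<bar>z - w i\<bar>"
proof (induction r arbitrary: p s)
  case 0 show ?case by simp
next
  case (Suc r)
  define \<delta> where "\<delta> = \<bar>z - w i\<bar>"
  define E where "E = (G*B)^r"
  define N where "N = real (A1*A2^2)"
  have d0: "\<delta> \<ge> 0" by (simp add: \<delta>_def)
  have GB: "G * B \<ge> 1" using G1 B1 by (metis mult_mono' mult_1_left zero_le_one)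
  have E1: "E \<ge> 1" unfolding E_def using GB by (rule one_le_power)
  have C'0: "C' \<ge> 0" using slip[of 1 0] by simp
  define \<beta> where "\<beta> = ((B+1)*E + C) * \<delta>"
  have b0: "\<beta> \<ge> 0" unfolding \<beta>_def using d0 E1 B1 C1 by simp
  define T where "T = (\<lambda>v s1 t1 t2. if (fst p + t1 - 1, snd p + t2 - 1) \<in> pix d1 d2
     then v (Conv (Suc r) t1 t2 s1 s k) * cnn_o \<sigma> d1 d2 M kc v k x r (fst p + t1 - 1, snd p + t2 - 1) s1 else 0)"
  have oeq: "cnn_o \<sigma> d1 d2 M kc v k x (Suc r) p s =
     \<sigma> ((\<Sum>s1\<in>{1..kc r}. \<Sum>t1\<in>{1..M (Suc r)}. \<Sum>t2\<in>{1..M (Suc r)}. T v s1 t1 t2) + v (Bias (Suc r) s k))" for v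
    by (simp add: T_def)
  have tm: "\<bar>T (w(i:=z)) s1 t1 t2 - T w s1 t1 t2\<bar> \<le> \<beta>"
    if s1: "s1 \<in> {1..kc r}" and t1: "t1 \<in> {1..M (Suc r)}" and t2: "t2 \<in> {1..M (Suc r)}" for s1 t1 t2
  proof (cases "(fst p + t1 - 1, snd p + t2 - 1) \<in> pix d1 d2")
    case False then show ?thesis using b0 by (simp add: T_def)
  next
    case True
    define q where "q = (fst p + t1 - 1, snd p + t2 - 1)"
    define Wz where "Wz = (w(i:=z)) (Conv (Suc r) t1 t2 s1 s k)"
    define W where "W = w (Conv (Suc r) t1 t2 s1 s k)"
    define oz where "oz = cnn_o \<sigma> d1 d2 M kc (w(i:=z)) k x r q s1"
    define ob0 where "ob0 = cnn_o \<sigma> d1 d2 M kc w k x r q s1"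
    have Teq: "T (w(i:=z)) s1 t1 t2 - T w s1 t1 t2 = Wz * (oz - ob0) + (Wz - W) * ob0"
      using True unfolding T_def Wz_def W_def oz_def ob0_def q_def by (simp add: algebra_simps)
    have dW: "\<bar>Wz - W\<bar> \<le> \<delta>" unfolding Wz_def W_def \<delta>_def by (rule upd_diff)
    have ob: "\<bar>ob0\<bar> \<le> C" unfolding ob0_def by (rule o_bound) (use sb C1 xb True q_def in auto)
    have p1: "\<bar>Wz * (oz - ob0)\<bar> \<le> (B+1) * E * \<delta>"
    proof (cases r)
      case 0 then show ?thesis using d0 E1 B1 by (simp add: oz_def ob0_def)
    next
      case (Suc r')
      have "\<bar>W\<bar> \<le> B" unfolding W_def
        by (rule wb) (use Suc.prems s1 t1 t2 \<open>r = Suc r'\<close> in auto)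
      then have Wzb: "\<bar>Wz\<bar> \<le> B + 1" using dW dz \<delta>_def by linarith
      have "\<bar>oz - ob0\<bar> \<le> E * \<delta>" unfolding oz_def ob0_def E_def \<delta>_def
        using Suc.IH[of s1 q, OF _ s1] Suc.prems(1) by (simp add: fun_upd_def)
      then have "\<bar>Wz\<bar> * \<bar>oz - ob0\<bar> \<le> (B+1) * (E * \<delta>)"
        using Wzb by (intro mult_mono) auto
      then show ?thesis by (simp add: abs_mult mult.assoc)
    qed
    have p2: "\<bar>(Wz - W) * ob0\<bar> \<le> \<delta> * C"
      unfolding abs_mult using dW ob d0 by (intro mult_mono) auto
    show ?thesis unfolding Teq \<beta>_def using p1 p2 abs_triangle_ineq[of "Wz * (oz - ob0)" "(Wz - W) * ob0"]
      by (simp add: algebra_simps)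
  qed
  have sumb: "\<bar>\<Sum>s1\<in>{1..kc r}. \<Sum>t1\<in>{1..M (Suc r)}. \<Sum>t2\<in>{1..M (Suc r)}. T (w(i:=z)) s1 t1 t2 - T w s1 t1 t2\<bar>
      \<le> real A1 * (real A2 * (real A2 * \<beta>))"
    using kb Mb b0 tm
    by (intro sum_abs_le) (auto intro!: mult_nonneg_nonneg)
  have diffeq: "((\<Sum>s1\<in>{1..kc r}. \<Sum>t1\<in>{1..M (Suc r)}. \<Sum>t2\<in>{1..M (Suc r)}. T (w(i:=z)) s1 t1 t2) + (w(i:=z)) (Bias (Suc r) s k))
     - ((\<Sum>s1\<in>{1..kc r}. \<Sum>t1\<in>{1..M (Suc r)}. \<Sum>t2\<in>{1..M (Suc r)}. T w s1 t1 t2) + w (Bias (Suc r) s k))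
     = (\<Sum>s1\<in>{1..kc r}. \<Sum>t1\<in>{1..M (Suc r)}. \<Sum>t2\<in>{1..M (Suc r)}. T (w(i:=z)) s1 t1 t2 - T w s1 t1 t2)
       + ((w(i:=z)) (Bias (Suc r) s k) - w (Bias (Suc r) s k))"
    by (simp add: sum_subtractf)
  have biasb: "\<bar>(w(i:=z)) (Bias (Suc r) s k) - w (Bias (Suc r) s k)\<bar> \<le> \<delta>"
    unfolding \<delta>_def by (rule upd_diff)
  have inner: "\<bar>((\<Sum>s1\<in>{1..kc r}. \<Sum>t1\<in>{1..M (Suc r)}. \<Sum>t2\<in>{1..M (Suc r)}. T (w(i:=z)) s1 t1 t2) + (w(i:=z)) (Bias (Suc r) s k))
     - ((\<Sum>s1\<in>{1..kc r}. \<Sum>t1\<in>{1..M (Suc r)}. \<Sum>t2\<in>{1..M (Suc r)}. T w s1 t1 t2) + w (Bias (Suc r) s k))\<bar>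
     \<le> N * \<beta> + \<delta>"
    unfolding diffeq N_def using sumb biasb by (simp add: algebra_simps power2_eq_square)
  have key: "C' * (N * ((B+1)*E + C) + 1) \<le> G * B * E"
  proof -
    have "N * ((B+1)*E + C) + 1 \<le> B * E * (N * (2 + C) + 1)"
    proof -
      have N0: "N \<ge> 0" by (simp add: N_def)
      have a: "(B+1)*E \<le> 2*B*E" using B1 E1 by (simp add: algebra_simps)
      have c: "1 \<le> B*E" using B1 E1 by (metis mult_mono' mult_1_left zero_le_one)
      have b: "C \<le> C*B*E" using mult_left_mono[OF c, of C] C1 by (simp add: mult.assoc)
      have "N * ((B+1)*E + C) \<le> N * (2*B*E + C*B*E)" using a b N0 by (intro mult_left_mono) auto
      then show ?thesis using c by (simp add: algebra_simps)
    qed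
    then have "C' * (N * ((B+1)*E + C) + 1) \<le> C' * (B * E * (N * (2 + C) + 1))"
      using C'0 by (rule mult_left_mono)
    also have "\<dots> = B * E * (C' * (N * (2 + C) + 1))" by (simp add: algebra_simps)
    also have "\<dots> \<le> B * E * G" using G2 B1 E1 N_def by (intro mult_left_mono) auto
    finally show ?thesis by (simp add: algebra_simps)
  qed
  have "\<bar>cnn_o \<sigma> d1 d2 M kc (w(i:=z)) k x (Suc r) p s - cnn_o \<sigma> d1 d2 M kc w k x (Suc r) p s\<bar>
     \<le> C' * (N * \<beta> + \<delta>)"
    unfolding oeq by (rule order_trans[OF slip mult_left_mono[OF inner C'0]])
  also have "\<dots> = C' * (N * ((B+1)*E + C) + 1) * \<delta>" by (simp add: \<beta>_def algebra_simps)
  also have "\<dots> \<le> G * B * E * \<delta>" using key d0 by (rule mult_right_mono)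
  also have "\<dots> = (G*B)^(Suc r) * \<bar>z - w i\<bar>" by (simp add: E_def \<delta>_def)
  finally show ?case .
qed


lemma avg_bound:
  fixes g :: "nat \<Rightarrow> nat \<Rightarrow> real"
  assumes "\<And>i j. \<bar>g i j\<bar> \<le> b"
  shows "\<bar>(1 / (real (a+1) * real (c+1))) * (\<Sum>i\<in>{1..a+1}. \<Sum>j\<in>{1..c+1}. g i j)\<bar> \<le> b"
proof -
  have b0: "b \<ge> 0" using assms[of 0 0] by linarith
  have "\<bar>\<Sum>i\<in>{1..a+1}. \<Sum>j\<in>{1..c+1}. g i j\<bar> \<le> real (a+1) * (real (c+1) * b)"
    using assms b0 by (intro sum_abs_le) auto
  moreover have D: "real (a+1) * real (c+1) > 0" by simp
  ultimately have "\<bar>\<Sum>i\<in>{1..a+1}. \<Sum>j\<in>{1..c+1}. g i j\<bar> / (real (a+1) * real (c+1))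
     \<le> (real (a+1) * (real (c+1) * b)) / (real (a+1) * real (c+1))"
    by (intro divide_right_mono) auto
  also have "\<dots> = b" using D by (simp add: field_simps)
  finally show ?thesis by (simp add: abs_mult)
qed

lemma o_bound1:
  assumes sb: "\<And>a. \<bar>\<sigma> a\<bar> \<le> C" and "r \<ge> 1"
  shows "\<bar>cnn_o \<sigma> d1 d2 M kc w k x r p s\<bar> \<le> C"
  using assms by (cases r) auto

lemma fk_bound:
  assumes sb: "\<And>a. \<bar>\<sigma> a\<bar> \<le> C" and C1: "C \<ge> 1" and L1: "L \<ge> 1"
  shows "\<bar>cnn_fk \<sigma> d1 d2 L M kc u k x\<bar> \<le> C"
  unfolding cnn_fk_def
  by (rule avg_bound) (rule o_bound1[OF sb L1])

lemma fk_lip: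
  fixes \<sigma> :: "real \<Rightarrow> real"
  assumes slip: "\<And>a b. \<bar>\<sigma> a - \<sigma> b\<bar> \<le> C' * \<bar>a - b\<bar>"
    and sb: "\<And>a. \<bar>\<sigma> a\<bar> \<le> C" and C1: "C \<ge> 1"
    and xb: "\<And>p. p \<in> pix d1 d2 \<Longrightarrow> \<bar>x p\<bar> \<le> 1"
    and Mb: "\<And>r. M r \<le> A2" and kb: "\<And>r. kc r \<le> A1"
    and wb: "\<And>r t1 t2 s1 s2. r \<in> {2..L} \<Longrightarrow> s2 \<in> {1..kc r} \<Longrightarrow> s1 \<in> {1..kc (r-1)}
       \<Longrightarrow> t1 \<in> {1..M r} \<Longrightarrow> t2 \<in> {1..M r} \<Longrightarrow> \<bar>w (Conv r t1 t2 s1 s2 k)\<bar> \<le> B"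
    and B1: "B \<ge> 1" and dz: "\<bar>z - w i\<bar> \<le> 1"
    and G1: "G \<ge> 1" and G2: "G \<ge> C' * (real (A1*A2^2) * (2 + C) + 1)"
    and kL: "kc L \<ge> 1"
  shows "\<bar>cnn_fk \<sigma> d1 d2 L M kc (w(i:=z)) k x - cnn_fk \<sigma> d1 d2 L M kc w k x\<bar> \<le> (G*B)^L * \<bar>z - w i\<bar>"
proof -
  have eq: "cnn_fk \<sigma> d1 d2 L M kc (w(i:=z)) k x - cnn_fk \<sigma> d1 d2 L M kc w k x =
    (1 / (real (d1 - M (L+1) + 1) * real (d2 - M (L+1) + 1))) *
     (\<Sum>ii\<in>{1..d1 - M (L+1) + 1}. \<Sum>jj\<in>{1..d2 - M (L+1) + 1}.
        cnn_o \<sigma> d1 d2 M kc (w(i:=z)) k x L (ii, jj) 1 - cnn_o \<sigma> d1 d2 M kc w k x L (ii, jj) 1)"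
    unfolding cnn_fk_def by (simp add: sum_subtractf right_diff_distrib)
  show ?thesis unfolding eq
    by (rule avg_bound) (rule o_lip[OF slip sb C1 xb Mb kb wb B1 dz G1 G2], use kL in auto)
qed

lemma sum_single_bound:
  fixes t :: "nat \<Rightarrow> real"
  assumes "\<And>k. k \<noteq> kz \<Longrightarrow> t k = 0" and "kz \<in> {1..K} \<Longrightarrow> \<bar>t kz\<bar> \<le> b" and "b \<ge> 0"
  shows "\<bar>\<Sum>k\<in>{1..K}. t k\<bar> \<le> b"
proof -
  have "(\<Sum>k\<in>{1..K}. t k) = (\<Sum>k\<in>{1..K}. if k = kz then t kz else 0)"
    by (rule sum.cong) (auto simp: assms(1))
  also have "\<dots> = (if kz \<in> {1..K} then t kz else 0)" by simp
  finally show ?thesis using assms by auto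
qed

fun kof :: "widx \<Rightarrow> nat" where
  "kof (Outer k) = k" | "kof (Conv r t1 t2 s1 s2 k) = k" | "kof (Bias r s k) = k"

lemma fk_indep:
  assumes "k \<noteq> kof i \<or> (\<exists>k'. i = Outer k')"
  shows "cnn_fk \<sigma> d1 d2 L M kc (w(i:=z)) k x = cnn_fk \<sigma> d1 d2 L M kc w k x"
proof -
  have "cnn_o \<sigma> d1 d2 M kc (w(i:=z)) k x r p s = cnn_o \<sigma> d1 d2 M kc w k x r p s" for r p s
    by (rule o_cong) (use assms in auto)
  then show ?thesis unfolding cnn_fk_def by simp
qed

lemma F_diff:
  assumes d: "\<forall>x. \<sigma> differentiable (at x)"
  shows "(\<lambda>z. Fn \<sigma> d1 d2 L M kc K n X Y c4 (w(i:=z))) differentiable (at z0)"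
proof -
  have u: "(\<lambda>z. (w(i:=z)) j) differentiable (at z0)" for j
    by (cases "j = i") auto
  have fk: "(\<lambda>z. cnn_fk \<sigma> d1 d2 L M kc (w(i:=z)) k x) differentiable (at z0)" for k x
    unfolding cnn_fk_def
    by (intro differentiable_mult differentiable_const differentiable_sum ballI finite_atLeastAtMost o_diff[OF d])
  have f: "(\<lambda>z. cnn_f \<sigma> d1 d2 L M kc K (w(i:=z)) x) differentiable (at z0)" for x
    unfolding cnn_f_def
    by (intro differentiable_mult differentiable_sum ballI finite_atLeastAtMost u fk)
  show ?thesis
    unfolding Fn_def power2_abs
    by (intro differentiable_add differentiable_mult differentiable_const differentiable_sum ballI
        finite_atLeastAtMost differentiable_power differentiable_diff f u)
qed


lemma card_widx:
  assumes Mb: "\<And>r. M r \<le> A2" and kb: "\<And>r. kc r \<le> A1"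
  shows "finite (weight_idx L M kc K) \<and> card (weight_idx L M kc K) \<le> (1 + L*A2*A2*A1*A1 + L*A1) * K"
proof -
  define S1 where "S1 = Outer ` {1..K}"
  define S2 where "S2 = (\<lambda>(r,t1,t2,s1,s2,k). Conv r t1 t2 s1 s2 k) ` ({1..L} \<times> {1..A2} \<times> {1..A2} \<times> {1..A1} \<times> {1..A1} \<times> {1..K})"
  define S3 where "S3 = (\<lambda>(r,s,k). Bias r s k) ` ({1..L} \<times> {1..A1} \<times> {1..K})"
  have sub: "weight_idx L M kc K \<subseteq> S1 \<union> S2 \<union> S3"
  proof
    fix j assume "j \<in> weight_idx L M kc K"
    then consider (ou) k where "j = Outer k" "k \<in> {1..K}"
      | (c) r t1 t2 s1 s2 k where "j = Conv r t1 t2 s1 s2 k" "r \<in> {1..L}" "t1 \<in> {1..M r}" "t2 \<in> {1..M r}"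
           "s1 \<in> {1..kc (r - 1)}" "s2 \<in> {1..kc r}" "k \<in> {1..K}"
      | (b) r s2 k where "j = Bias r s2 k" "r \<in> {1..L}" "s2 \<in> {1..kc r}" "k \<in> {1..K}"
      unfolding weight_idx_def by blast
    then show "j \<in> S1 \<union> S2 \<union> S3"
    proof cases
      case ou then show ?thesis by (simp add: S1_def)
    next
      case c
      have "(r,t1,t2,s1,s2,k) \<in> {1..L} \<times> {1..A2} \<times> {1..A2} \<times> {1..A1} \<times> {1..A1} \<times> {1..K}"
        using c Mb[of r] kb[of r] kb[of "r-1"] by auto
      then have "j \<in> S2" unfolding S2_def using c(1) by (auto intro!: image_eqI[where x="(r,t1,t2,s1,s2,k)"])
      then show ?thesis by simp
    next
      case b
      have "(r,s2,k) \<in> {1..L} \<times> {1..A1} \<times> {1..K}"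
        using b kb[of r] by auto
      then have "j \<in> S3" unfolding S3_def using b(1) by (auto intro!: image_eqI[where x="(r,s2,k)"])
      then show ?thesis by simp
    qed
  qed
  have f: "finite (S1 \<union> S2 \<union> S3)" unfolding S1_def S2_def S3_def by auto
  have c1: "card S1 \<le> K" unfolding S1_def using card_image_le[of "{1..K}" Outer] by simp
  have c2: "card S2 \<le> L*A2*A2*A1*A1*K" unfolding S2_def
    using card_image_le[of "{1..L} \<times> {1..A2} \<times> {1..A2} \<times> {1..A1} \<times> {1..A1} \<times> {1..K}"]
    by (simp add: card_cartesian_product mult.assoc)
  have c3: "card S3 \<le> L*A1*K" unfolding S3_def
    using card_image_le[of "{1..L} \<times> {1..A1} \<times> {1..K}"]
    by (simp add: card_cartesian_product mult.assoc)
  have "card (weight_idx L M kc K) \<le> card (S1 \<union> S2 \<union> S3)" by (rule card_mono[OF f sub])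
  also have "\<dots> \<le> card S1 + card S2 + card S3" using card_Un_le[of "S1 \<union> S2" S3] card_Un_le[of S1 S2] by linarith
  also have "\<dots> \<le> (1 + L*A2*A2*A1*A1 + L*A1) * K" using c1 c2 c3 by (simp add: algebra_simps)
  finally show ?thesis using finite_subset[OF sub f] by simp
qed

lemma f_lip:
  fixes \<sigma> :: "real \<Rightarrow> real"
  assumes slip: "\<And>a b. \<bar>\<sigma> a - \<sigma> b\<bar> \<le> C' * \<bar>a - b\<bar>"
    and sb: "\<And>a. \<bar>\<sigma> a\<bar> \<le> C" and C1: "C \<ge> 1"
    and xb: "\<And>p. p \<in> pix d1 d2 \<Longrightarrow> \<bar>x p\<bar> \<le> 1"
    and Mb: "\<And>r. M r \<le> A2" and kb: "\<And>r. kc r \<le> A1"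
    and wb: "\<And>r t1 t2 s1 s2 k. k \<in> {1..K} \<Longrightarrow> r \<in> {2..L} \<Longrightarrow> s2 \<in> {1..kc r} \<Longrightarrow> s1 \<in> {1..kc (r-1)}
       \<Longrightarrow> t1 \<in> {1..M r} \<Longrightarrow> t2 \<in> {1..M r} \<Longrightarrow> \<bar>w (Conv r t1 t2 s1 s2 k)\<bar> \<le> B"
    and wo: "\<And>k. k \<in> {1..K} \<Longrightarrow> \<bar>w (Outer k)\<bar> \<le> \<gamma>" and g0: "\<gamma> \<ge> 0"
    and B1: "B \<ge> 1" and dz: "\<bar>z - w i\<bar> \<le> 1"
    and G1: "G \<ge> 1" and G2: "G \<ge> C' * (real (A1*A2^2) * (2 + C) + 1)"
    and kL: "kc L \<ge> 1" and L1: "L \<ge> 1"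
  shows "\<bar>cnn_f \<sigma> d1 d2 L M kc K (w(i:=z)) x - cnn_f \<sigma> d1 d2 L M kc K w x\<bar> \<le> (C + \<gamma>*(G*B)^L) * \<bar>z - w i\<bar>"
proof -
  define fz where "fz = (\<lambda>k. cnn_fk \<sigma> d1 d2 L M kc (w(i:=z)) k x)"
  define f0 where "f0 = (\<lambda>k. cnn_fk \<sigma> d1 d2 L M kc w k x)"
  define \<delta> where "\<delta> = \<bar>z - w i\<bar>"
  have d0: "\<delta> \<ge> 0" by (simp add: \<delta>_def)
  have GB: "(G*B)^L \<ge> 0" using G1 B1 by simp
  have eq: "cnn_f \<sigma> d1 d2 L M kc K (w(i:=z)) x - cnn_f \<sigma> d1 d2 L M kc K w x
     = (\<Sum>k\<in>{1..K}. (w(i:=z)) (Outer k) * fz k - w (Outer k) * f0 k)"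
    unfolding cnn_f_def fz_def f0_def by (simp add: sum_subtractf)
  show ?thesis unfolding eq \<delta>_def[symmetric]
  proof (rule sum_single_bound[where kz="kof i"])
    fix k assume k: "k \<noteq> kof i"
    then have "i \<noteq> Outer k" by auto
    moreover have "fz k = f0 k" unfolding fz_def f0_def by (rule fk_indep) (use k in auto)
    ultimately show "(w(i:=z)) (Outer k) * fz k - w (Outer k) * f0 k = 0" by simp
  next
    show "(C + \<gamma>*(G*B)^L) * \<delta> \<ge> 0" using d0 GB C1 g0 by simp
  next
    assume k0: "kof i \<in> {1..K}"
    show "\<bar>(w(i:=z)) (Outer (kof i)) * fz (kof i) - w (Outer (kof i)) * f0 (kof i)\<bar> \<le> (C + \<gamma>*(G*B)^L) * \<delta>"
    proof (cases "\<exists>k'. i = Outer k'")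
      case True
      then obtain k' where i: "i = Outer k'" by blast
      have "fz k' = f0 k'" unfolding fz_def f0_def by (rule fk_indep) (use i in auto)
      then have "(w(i:=z)) (Outer (kof i)) * fz (kof i) - w (Outer (kof i)) * f0 (kof i) = (z - w i) * f0 k'"
        using i by (simp add: algebra_simps)
      moreover have "\<bar>(z - w i) * f0 k'\<bar> \<le> \<delta> * C"
        unfolding abs_mult \<delta>_def f0_def using fk_bound[OF sb C1 L1] by (intro mult_left_mono) auto
      moreover have "\<delta> * C \<le> (C + \<gamma>*(G*B)^L) * \<delta>" using d0 GB g0 by (simp add: algebra_simps)
      ultimately show ?thesis by simp
    next
      case False
      then have "i \<noteq> Outer (kof i)" by blast
      then have "(w(i:=z)) (Outer (kof i)) * fz (kof i) - w (Outer (kof i)) * f0 (kof i)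
          = w (Outer (kof i)) * (fz (kof i) - f0 (kof i))" by (simp add: algebra_simps)
      moreover have "\<bar>fz (kof i) - f0 (kof i)\<bar> \<le> (G*B)^L * \<delta>"
      proof -
        have wbk: "\<And>r t1 t2 s1 s2. r \<in> {2..L} \<Longrightarrow> s2 \<in> {1..kc r} \<Longrightarrow> s1 \<in> {1..kc (r-1)}
           \<Longrightarrow> t1 \<in> {1..M r} \<Longrightarrow> t2 \<in> {1..M r} \<Longrightarrow> \<bar>w (Conv r t1 t2 s1 s2 (kof i))\<bar> \<le> B"
          using wb k0 by blast
        show ?thesis unfolding fz_def f0_def \<delta>_def
          by (rule fk_lip[of \<sigma> C' C d1 d2 x M A2 kc A1 L w "kof i" B z i G, OF slip sb C1 xb Mb kb wbk B1 dz G1 G2 kL])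
      qed
      then have "\<bar>w (Outer (kof i)) * (fz (kof i) - f0 (kof i))\<bar> \<le> \<gamma> * ((G*B)^L * \<delta>)"
        unfolding abs_mult using wo[OF k0] by (intro mult_mono) auto
      moreover have "\<gamma> * ((G*B)^L * \<delta>) \<le> (C + \<gamma>*(G*B)^L) * \<delta>" using d0 C1 by (simp add: algebra_simps)
      ultimately show ?thesis by simp
    qed
  qed
qed

lemma ge1_mult: fixes a b :: real assumes "a \<ge> 1" "b \<ge> 1" shows "a*b \<ge> 1"
  using mult_mono[of 1 a 1 b] assms by simp

lemma arith_main:
  fixes C g \<beta> \<gamma> s K c4 SS :: real
  assumes C1: "C \<ge> 1" and g1: "g \<ge> 1" and b1: "\<beta> \<ge> 1" and y1: "\<gamma> \<ge> 1" and s1: "s \<ge> 1" and K1: "K \<ge> 1"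
    and c4: "c4 \<ge> 0" and S0: "SS \<ge> 0" and SB: "SS \<le> s + K*C*(2*\<gamma>+2* s)"
  shows "(C + \<gamma>*(g*\<beta>))*(2*SS + (C + \<gamma>*(g*\<beta>))) + 3*c4*\<gamma>
     \<le> K* s*\<gamma>^2*\<beta>^2*(10*C*(C+g) + (C+g)^2 + 3*c4)"
proof -
  define H where "H = C + g"
  have H0: "H \<ge> 0" using C1 g1 H_def by simp
  have yb: "\<gamma>*\<beta> \<ge> 1" using y1 b1 by (rule ge1_mult)
  have Lam: "C + \<gamma>*(g*\<beta>) \<le> H*(\<gamma>*\<beta>)"
  proof -
    have "C*1 \<le> C*(\<gamma>*\<beta>)" using yb C1 by (intro mult_left_mono) auto
    then show ?thesis unfolding H_def by (simp add: algebra_simps)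
  qed
  have KCys: "K*C*\<gamma>* s \<ge> 1" using K1 C1 y1 s1 by (intro ge1_mult) auto
  have "2*SS \<le> 2* s + 4*K*C*\<gamma> + 4*K*C* s" using SB by (simp add: algebra_simps)
  also have "\<dots> \<le> 10*(K*C*\<gamma>* s)"
  proof -
    have KCy: "K*C*\<gamma> \<ge> 1" using K1 C1 y1 by (intro ge1_mult) auto
    have a: "1* s \<le> (K*C*\<gamma>)* s" using KCy s1 by (intro mult_right_mono) auto
    have b: "(K*C*\<gamma>)*1 \<le> (K*C*\<gamma>)* s" using KCy s1 by (intro mult_left_mono) auto
    have KC: "K*C \<ge> 1" using K1 C1 by (intro ge1_mult) auto
    have c: "(K*C)*(1* s) \<le> (K*C)*(\<gamma>* s)" using KC y1 s1 by (intro mult_left_mono mult_right_mono) auto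
    show ?thesis using a b c by (simp add: algebra_simps)
  qed
  finally have S2: "2*SS \<le> 10*(K*C*\<gamma>* s)" .
  have L0: "C + \<gamma>*(g*\<beta>) \<ge> 0" using C1 y1 g1 b1 by simp
  have "(C + \<gamma>*(g*\<beta>))*(2*SS + (C + \<gamma>*(g*\<beta>))) \<le> (H*(\<gamma>*\<beta>))*(10*(K*C*\<gamma>* s) + H*(\<gamma>*\<beta>))"
  proof -
    have X: "2*SS + (C + \<gamma>*(g*\<beta>)) \<le> 10*(K*C*\<gamma>* s) + H*(\<gamma>*\<beta>)" by (rule add_mono[OF S2 Lam])
    have "0 \<le> 2*SS + (C + \<gamma>*(g*\<beta>))" using S0 L0 by simp
    then show ?thesis using mult_mono[OF Lam X] H0 yb by simp
  qed
  also have "\<dots> = 10*C*H*(K* s*\<gamma>^2*\<beta>) + H^2*(\<gamma>^2*\<beta>^2)" by (simp add: algebra_simps power2_eq_square)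
  also have "\<dots> \<le> 10*C*H*(K* s*\<gamma>^2*\<beta>^2) + H^2*(K* s*\<gamma>^2*\<beta>^2)"
  proof -
    have "\<beta> \<le> \<beta>^2" using b1 by (simp add: power2_eq_square)
    then have a: "K* s*\<gamma>^2*\<beta> \<le> K* s*\<gamma>^2*\<beta>^2" using K1 s1 y1 by (intro mult_left_mono) auto
    have "1 \<le> K* s" using K1 s1 by (rule ge1_mult)
    then have b: "1*(\<gamma>^2*\<beta>^2) \<le> K* s*(\<gamma>^2*\<beta>^2)" by (intro mult_right_mono) auto
    have a': "10*C*H*(K* s*\<gamma>^2*\<beta>) \<le> 10*C*H*(K* s*\<gamma>^2*\<beta>^2)" by (rule mult_left_mono[OF a]) (use C1 H0 in simp)
    have b': "H^2*(\<gamma>^2*\<beta>^2) \<le> H^2*(K* s*(\<gamma>^2*\<beta>^2))" by (rule mult_left_mono[OF b[simplified]]) simp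
    show ?thesis using a' b' by (simp add: mult.assoc)
  qed
  finally have A: "(C + \<gamma>*(g*\<beta>))*(2*SS + (C + \<gamma>*(g*\<beta>))) \<le> 10*C*H*(K* s*\<gamma>^2*\<beta>^2) + H^2*(K* s*\<gamma>^2*\<beta>^2)" .
  have "\<gamma> \<le> K* s*\<gamma>^2*\<beta>^2"
  proof -
    have "1 \<le> K* s*\<gamma>*\<beta>^2" using K1 s1 y1 b1 by (intro ge1_mult one_le_power) auto
    then have "\<gamma>*1 \<le> \<gamma>*(K* s*\<gamma>*\<beta>^2)" using y1 by (intro mult_left_mono) auto
    then show ?thesis by (simp add: power2_eq_square algebra_simps)
  qed
  then have B: "3*c4*\<gamma> \<le> 3*c4*(K* s*\<gamma>^2*\<beta>^2)" using c4 by (intro mult_left_mono) auto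
  show ?thesis using A B unfolding H_def by (simp add: algebra_simps)
qed

lemma mean_abs_le:
  fixes a :: "nat \<Rightarrow> real"
  assumes n: "n \<ge> 1" and s: "s > 0" and sq: "(1 / real n) * (\<Sum>j\<in>{1..n}. (a j)^2) \<le> s^2"
  shows "(1 / real n) * (\<Sum>j\<in>{1..n}. \<bar>a j\<bar>) \<le> s"
proof -
  have pt: "\<bar>a j\<bar> \<le> ((a j)^2 + s^2) / (2* s)" for j
  proof -
    have "0 \<le> (\<bar>a j\<bar> - s)^2" by simp
    then have "2* s*\<bar>a j\<bar> \<le> (a j)^2 + s^2" by (simp add: power2_eq_square algebra_simps)
    then show ?thesis using s by (simp add: field_simps)
  qed
  have "(\<Sum>j\<in>{1..n}. \<bar>a j\<bar>) \<le> (\<Sum>j\<in>{1..n}. ((a j)^2 + s^2) / (2* s))" by (rule sum_mono) (rule pt)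
  also have "\<dots> = ((\<Sum>j\<in>{1..n}. (a j)^2) + real n * s^2) / (2* s)"
    by (simp add: sum_divide_distrib[symmetric] sum.distrib)
  finally have "(1 / real n) * (\<Sum>j\<in>{1..n}. \<bar>a j\<bar>) \<le> (1 / real n) * (((\<Sum>j\<in>{1..n}. (a j)^2) + real n * s^2) / (2* s))"
    using n by (intro mult_left_mono) auto
  also have "\<dots> = ((1 / real n) * (\<Sum>j\<in>{1..n}. (a j)^2) + s^2) / (2* s)"
    using n by (simp add: field_simps)
  also have "\<dots> \<le> (s^2 + s^2) / (2* s)" using sq s by (intro divide_right_mono) auto
  also have "\<dots> = s" using s by (simp add: power2_eq_square field_simps)
  finally show ?thesis .
qed

lemma penalty_diff:
  fixes w :: "widx \<Rightarrow> real"
  assumes wo: "\<And>k. k \<in> {1..K} \<Longrightarrow> \<bar>w (Outer k)\<bar> \<le> \<gamma>" and y1: "\<gamma> \<ge> 1" and dz: "\<bar>z - w i\<bar> \<le> 1"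
  shows "\<bar>(\<Sum>k\<in>{1..K}. ((w(i:=z)) (Outer k))^2) - (\<Sum>k\<in>{1..K}. (w (Outer k))^2)\<bar> \<le> 3*\<gamma>*\<bar>z - w i\<bar>"
  unfolding sum_subtractf[symmetric]
proof (rule sum_single_bound[where kz="kof i"])
  fix k assume "k \<noteq> kof i"
  then have "i \<noteq> Outer k" by auto
  then show "((w(i:=z)) (Outer k))^2 - (w (Outer k))^2 = 0" by simp
next
  show "3*\<gamma>*\<bar>z - w i\<bar> \<ge> 0" using y1 by simp
next
  assume k0: "kof i \<in> {1..K}"
  show "\<bar>((w(i:=z)) (Outer (kof i)))^2 - (w (Outer (kof i)))^2\<bar> \<le> 3*\<gamma>*\<bar>z - w i\<bar>"
  proof (cases "i = Outer (kof i)")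
    case True
    have wi: "\<bar>w i\<bar> \<le> \<gamma>" using wo[OF k0] True by simp
    have "((w(i:=z)) (Outer (kof i)))^2 - (w (Outer (kof i)))^2 = (z - w i) * (z + w i)"
    proof -
      have "(w(i:=z)) (Outer (kof i)) = z" "w (Outer (kof i)) = w i" using True[symmetric] by simp_all
      then show ?thesis by (simp add: power2_eq_square algebra_simps)
    qed
    moreover have "\<bar>z + w i\<bar> \<le> 3*\<gamma>"
    proof -
      have "\<bar>z + w i\<bar> \<le> \<bar>z - w i\<bar> + 2*\<bar>w i\<bar>" by linarith
      then show ?thesis using dz wi y1 by linarith
    qed
    ultimately show ?thesis
    proof -
      assume e: "((w(i:=z)) (Outer (kof i)))^2 - (w (Outer (kof i)))^2 = (z - w i) * (z + w i)"
        and b: "\<bar>z + w i\<bar> \<le> 3*\<gamma>"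
      have "\<bar>z - w i\<bar> * \<bar>z + w i\<bar> \<le> \<bar>z - w i\<bar> * (3*\<gamma>)" by (rule mult_left_mono[OF b]) simp
      then show ?thesis unfolding e abs_mult by (simp add: mult.commute)
    qed
  next
    case False
    then show ?thesis using y1 by simp
  qed
qed

lemma loss_diff:
  fixes fz f0 Y :: "nat \<Rightarrow> real"
  assumes n: "n \<ge> 1" and fd: "\<And>j. j \<in> {1..n} \<Longrightarrow> \<bar>fz j - f0 j\<bar> \<le> \<Lambda> * \<delta>"
    and d1: "\<delta> \<le> 1" and d0: "\<delta> \<ge> 0" and L0: "\<Lambda> \<ge> 0"
  shows "\<bar>(1 / real n) * (\<Sum>j\<in>{1..n}. \<bar>Y j - fz j\<bar>^2) - (1 / real n) * (\<Sum>j\<in>{1..n}. \<bar>Y j - f0 j\<bar>^2)\<bar>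
     \<le> \<Lambda> * \<delta> * (2 * ((1 / real n) * (\<Sum>j\<in>{1..n}. \<bar>Y j - f0 j\<bar>)) + \<Lambda>)"
proof -
  have pt: "\<bar>\<bar>Y j - fz j\<bar>^2 - \<bar>Y j - f0 j\<bar>^2\<bar> \<le> \<Lambda> * \<delta> * (2 * \<bar>Y j - f0 j\<bar> + \<Lambda>)" if j: "j \<in> {1..n}" for j
  proof -
    have eq: "\<bar>Y j - fz j\<bar>^2 - \<bar>Y j - f0 j\<bar>^2 = (fz j - f0 j) * ((fz j - f0 j) - 2 * (Y j - f0 j))"
      by (simp add: power2_eq_square algebra_simps)
    have a: "\<bar>fz j - f0 j\<bar> \<le> \<Lambda>" using fd[OF j] d1 L0 by (meson mult_left_le order_trans)
    have b: "\<bar>(fz j - f0 j) - 2 * (Y j - f0 j)\<bar> \<le> 2 * \<bar>Y j - f0 j\<bar> + \<Lambda>"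
    proof -
      have t: "\<bar>(fz j - f0 j) - 2 * (Y j - f0 j)\<bar> \<le> \<bar>fz j - f0 j\<bar> + \<bar>2 * (Y j - f0 j)\<bar>"
        by (rule abs_triangle_ineq4)
      have "\<bar>2 * (Y j - f0 j)\<bar> = 2 * \<bar>Y j - f0 j\<bar>" by (simp only: abs_mult abs_numeral)
      then show ?thesis using t a by linarith
    qed
    show ?thesis unfolding eq abs_mult using fd[OF j] b by (intro mult_mono) auto
  qed
  have "\<bar>(1 / real n) * (\<Sum>j\<in>{1..n}. \<bar>Y j - fz j\<bar>^2) - (1 / real n) * (\<Sum>j\<in>{1..n}. \<bar>Y j - f0 j\<bar>^2)\<bar>
      = (1 / real n) * \<bar>\<Sum>j\<in>{1..n}. \<bar>Y j - fz j\<bar>^2 - \<bar>Y j - f0 j\<bar>^2\<bar>"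
    by (simp only: right_diff_distrib[symmetric] abs_mult sum_subtractf) simp
  also have "\<dots> \<le> (1 / real n) * (\<Sum>j\<in>{1..n}. \<Lambda> * \<delta> * (2 * \<bar>Y j - f0 j\<bar> + \<Lambda>))"
    by (intro mult_left_mono order_trans[OF sum_abs] sum_mono pt) auto
  also have "\<dots> = \<Lambda> * \<delta> * (2 * ((1 / real n) * (\<Sum>j\<in>{1..n}. \<bar>Y j - f0 j\<bar>)) + \<Lambda>)"
    using n by (simp add: sum.distrib sum_distrib_left[symmetric] field_simps)
  finally show ?thesis .
qed

theorem lemma3:
  fixes \<sigma> :: "real \<Rightarrow> real" and d1 d2 \<kappa> L :: nat and c4 :: real
  assumes sigma_bdd: "\<exists>C. \<forall>x. \<bar>\<sigma> x\<bar> \<le> C"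
    and sigma_diff: "\<forall>x. \<sigma> differentiable (at x)"
    and sigma_deriv_bdd: "\<exists>C. \<forall>x. \<bar>deriv \<sigma> x\<bar> \<le> C"
    and kappa_pos: "\<kappa> \<ge> 1"
    and kappa_le: "\<kappa> \<le> min d1 d2"
    and L_ge: "L \<ge> 2"
    and c4_pos: "c4 > 0"
  shows "\<exists>c8 > 0. \<forall>(n::nat) (K::nat) (X :: nat \<Rightarrow> nat \<times> nat \<Rightarrow> real) (Y :: nat \<Rightarrow> real)
            (tn::real) (Ln::real) (\<gamma>::real) (B::real) (w :: widx \<Rightarrow> real) (v :: widx \<Rightarrow> real).
     n \<ge> 1 \<longrightarrow>
     (\<forall>i\<in>{1..n}. (\<forall>p\<in>pix d1 d2. X i p \<in> {0..1}) \<and> Y i \<in> {0, 1}) \<longrightarrow>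
     tn > 0 \<longrightarrow> Ln > 0 \<longrightarrow> tn \<ge> Ln \<longrightarrow> \<gamma> \<ge> 1 \<longrightarrow> B \<ge> 1 \<longrightarrow>
     (\<forall>k\<in>{1..K}. \<bar>w (Outer k)\<bar> \<le> \<gamma>) \<longrightarrow>
     (\<forall>r\<in>{2..L}. \<forall>k\<in>{1..K}. \<forall>s2\<in>{1..arch_k \<kappa> L r}.
        \<bar>w (Bias r s2 k)\<bar> \<le> B \<and>
        (\<forall>s1\<in>{1..arch_k \<kappa> L (r - 1)}. \<forall>t1\<in>{1..arch_M \<kappa> L r}. \<forall>t2\<in>{1..arch_M \<kappa> L r}.
           \<bar>w (Conv r t1 t2 s1 s2 k)\<bar> \<le> B)) \<longrightarrow>
     (sup_dist (weight_idx L (arch_M \<kappa> L) (arch_k \<kappa> L) K) w v)^2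
        \<le> 2 * tn / Ln * max (Fn \<sigma> d1 d2 L (arch_M \<kappa> L) (arch_k \<kappa> L) K n X Y c4 v) 1 \<longrightarrow>
     grad_norm (Fn \<sigma> d1 d2 L (arch_M \<kappa> L) (arch_k \<kappa> L) K n X Y c4)
               (weight_idx L (arch_M \<kappa> L) (arch_k \<kappa> L) K) w
       \<le> c8 * real K powr (3/2) * B ^ (2 * L) * \<gamma>^2
          * sqrt (tn / Ln * max (Fn \<sigma> d1 d2 L (arch_M \<kappa> L) (arch_k \<kappa> L) K n X Y c4 v) 1)"
  proof -
  obtain C0 where C0: "\<forall>x. \<bar>\<sigma> x\<bar> \<le> C0" using sigma_bdd by blast
  obtain C' where C'b: "\<forall>x. \<bar>deriv \<sigma> x\<bar> \<le> C'" using sigma_deriv_bdd by blast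
  define C where "C = max C0 1"
  have sb: "\<And>a. \<bar>\<sigma> a\<bar> \<le> C" using C0 unfolding C_def by (meson max.coboundedI1)
  have C1: "C \<ge> 1" by (simp add: C_def)
  have slip: "\<And>a b. \<bar>\<sigma> a - \<sigma> b\<bar> \<le> C' * \<bar>a - b\<bar>" using sigma_lip[OF sigma_diff C'b] .
  define A1 where "A1 = 2*\<kappa>^2"
  define A2 where "A2 = \<kappa>"
  have Mb: "\<And>r. arch_M \<kappa> L r \<le> A2" using kappa_pos by (simp add: arch_M_def A2_def)
  have kb: "\<And>r. arch_k \<kappa> L r \<le> A1"
  proof -
    fix r
    have "1 \<le> \<kappa>^2" using kappa_pos by simp
    then show "arch_k \<kappa> L r \<le> A1" by (simp add: arch_k_def A1_def)
  qed
  have kL: "arch_k \<kappa> L L \<ge> 1" by (simp add: arch_k_def)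
  have L1: "L \<ge> 1" using L_ge by simp
  define G where "G = max 1 (C' * (real (A1*A2^2) * (2 + C) + 1))"
  have G1: "G \<ge> 1" and G2: "G \<ge> C' * (real (A1*A2^2) * (2 + C) + 1)" by (simp_all add: G_def)
  define H where "H = C + G^L"
  define Q where "Q = 10*C*H + H^2 + 3*c4"
  define P where "P = 1 + L*A2*A2*A1*A1 + L*A1"
  define c8 where "c8 = sqrt (real P) * Q"
  have H0: "H \<ge> 0" using C1 G1 by (simp add: H_def)
  have Q0: "Q > 0"
  proof -
    have "0 \<le> 10*C*H" using H0 C1 by simp
    moreover have "0 \<le> H^2" by simp
    ultimately show ?thesis using c4_pos unfolding Q_def by linarith
  qed
  have P1: "P \<ge> 1" by (simp add: P_def)
  have c80: "c8 > 0" using Q0 P1 by (simp add: c8_def)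
  show ?thesis
  proof (intro exI[of _ c8] conjI allI impI)
    show "c8 > 0" by (rule c80)
  next
    fix n K :: nat and X :: "nat \<Rightarrow> nat \<times> nat \<Rightarrow> real" and Y :: "nat \<Rightarrow> real"
      and tn Ln \<gamma> B :: real and w v :: "widx \<Rightarrow> real"
    assume hn: "n \<ge> 1"
      and hXY: "\<forall>i\<in>{1..n}. (\<forall>p\<in>pix d1 d2. X i p \<in> {0..1}) \<and> Y i \<in> {0, 1}"
      and htn: "tn > 0" and hLn: "Ln > 0" and htL: "tn \<ge> Ln" and hy: "\<gamma> \<ge> 1" and hB: "B \<ge> 1"
      and hwo: "\<forall>k\<in>{1..K}. \<bar>w (Outer k)\<bar> \<le> \<gamma>"
      and hwb: "\<forall>r\<in>{2..L}. \<forall>k\<in>{1..K}. \<forall>s2\<in>{1..arch_k \<kappa> L r}.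
        \<bar>w (Bias r s2 k)\<bar> \<le> B \<and>
        (\<forall>s1\<in>{1..arch_k \<kappa> L (r - 1)}. \<forall>t1\<in>{1..arch_M \<kappa> L r}. \<forall>t2\<in>{1..arch_M \<kappa> L r}.
           \<bar>w (Conv r t1 t2 s1 s2 k)\<bar> \<le> B)"
      and hD: "(sup_dist (weight_idx L (arch_M \<kappa> L) (arch_k \<kappa> L) K) w v)^2
        \<le> 2 * tn / Ln * max (Fn \<sigma> d1 d2 L (arch_M \<kappa> L) (arch_k \<kappa> L) K n X Y c4 v) 1"
    let ?M = "arch_M \<kappa> L" and ?k = "arch_k \<kappa> L"
    let ?I = "weight_idx L ?M ?k K" and ?F = "Fn \<sigma> d1 d2 L ?M ?k K n X Y c4"
    define s where "s = sqrt (tn / Ln * max (?F v) 1)"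
    have cI: "finite ?I \<and> card ?I \<le> P * K" using card_widx[of ?M A2 ?k A1 L K, OF Mb kb] by (simp add: P_def)
    have wb: "\<And>r t1 t2 s1 s2 k. k \<in> {1..K} \<Longrightarrow> r \<in> {2..L} \<Longrightarrow> s2 \<in> {1..?k r} \<Longrightarrow> s1 \<in> {1..?k (r-1)}
       \<Longrightarrow> t1 \<in> {1..?M r} \<Longrightarrow> t2 \<in> {1..?M r} \<Longrightarrow> \<bar>w (Conv r t1 t2 s1 s2 k)\<bar> \<le> B"
      using hwb by blast
    have wo: "\<And>k. k \<in> {1..K} \<Longrightarrow> \<bar>w (Outer k)\<bar> \<le> \<gamma>" using hwo by blast
    have xb: "\<And>p. p \<in> pix d1 d2 \<Longrightarrow> \<bar>X j p\<bar> \<le> 1" if "j \<in> {1..n}" for j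
    proof -
      fix p assume p: "p \<in> pix d1 d2"
      have "X j p \<in> {0..1}" using hXY that p by blast
      then show "\<bar>X j p\<bar> \<le> 1" by simp
    qed
    show "grad_norm ?F ?I w \<le> c8 * real K powr (3/2) * B ^ (2 * L) * \<gamma>^2 * sqrt (tn / Ln * max (?F v) 1)"
    proof (cases "K = 0")
      case True
      then have "?I = {}" by (simp add: weight_idx_def)
      then show ?thesis using True by (simp add: grad_norm_def)
    next
      case False
      then have K1: "real K \<ge> 1" by simp
      have tL: "tn / Ln \<ge> 1" using htL hLn by simp
      have s2: "s^2 = tn / Ln * max (?F v) 1" unfolding s_def using tL by (intro real_sqrt_pow2 mult_nonneg_nonneg) auto
      have s1: "s \<ge> 1" unfolding s_def using tL
        by (intro real_sqrt_ge_one ge1_mult) auto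
      have Fv: "?F v \<le> s^2"
      proof -
        have "?F v \<le> max (?F v) 1" by simp
        also have "\<dots> \<le> tn / Ln * max (?F v) 1" using mult_right_mono[OF tL, of "max (?F v) 1"] by simp
        finally show ?thesis using s2 by simp
      qed
      define D where "D = sup_dist ?I w v"
      have finI: "finite ?I" using cI by blast
      have finD: "finite (insert 0 ((\<lambda>i. \<bar>w i - v i\<bar>) ` ?I))" using finI by simp
      have D0: "D \<ge> 0" unfolding D_def sup_dist_def by (rule Max_ge[OF finD]) simp
      have Dk: "\<bar>w (Outer k) - v (Outer k)\<bar> \<le> D" if k: "k \<in> {1..K}" for k
      proof -
        have "Outer k \<in> ?I" using k by (simp add: weight_idx_def)
        then have "\<bar>w (Outer k) - v (Outer k)\<bar> \<in> insert 0 ((\<lambda>i. \<bar>w i - v i\<bar>) ` ?I)" by (intro insertI2 imageI)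
        then show ?thesis unfolding D_def sup_dist_def by (rule Max_ge[OF finD])
      qed
      have D2: "D \<le> 2 * s"
      proof -
        have e: "2 * tn / Ln * max (?F v) 1 = 2 * s^2" unfolding s2 by simp
        have h1: "D^2 \<le> 2 * s^2" using hD unfolding D_def e .
        have h2: "2 * s^2 \<le> (2 * s)^2" unfolding power_mult_distrib by simp
        have "D^2 \<le> (2 * s)^2" using h1 h2 by (rule order_trans)
        moreover have "0 \<le> 2 * s" using s1 by simp
        ultimately show ?thesis by (rule power2_le_imp_le)
      qed
      have meanv: "(1 / real n) * (\<Sum>j\<in>{1..n}. \<bar>Y j - cnn_f \<sigma> d1 d2 L ?M ?k K v (X j)\<bar>) \<le> s"
      proof (rule mean_abs_le[OF hn])
        show "s > 0" using s1 by simp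
        have "(1 / real n) * (\<Sum>j\<in>{1..n}. (Y j - cnn_f \<sigma> d1 d2 L ?M ?k K v (X j))^2) \<le> ?F v"
          unfolding Fn_def using c4_pos by (simp add: sum_nonneg)
        then show "(1 / real n) * (\<Sum>j\<in>{1..n}. (Y j - cnn_f \<sigma> d1 d2 L ?M ?k K v (X j))^2) \<le> s^2"
          using Fv by linarith
      qed
      have fvw: "\<bar>cnn_f \<sigma> d1 d2 L ?M ?k K v x - cnn_f \<sigma> d1 d2 L ?M ?k K w x\<bar> \<le> real K * (C * (2*\<gamma> + D))" for x
      proof -
        have eq: "cnn_f \<sigma> d1 d2 L ?M ?k K v x - cnn_f \<sigma> d1 d2 L ?M ?k K w x =
          (\<Sum>k\<in>{1..K}. v (Outer k) * cnn_fk \<sigma> d1 d2 L ?M ?k v k x - w (Outer k) * cnn_fk \<sigma> d1 d2 L ?M ?k w k x)"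
          unfolding cnn_f_def by (simp add: sum_subtractf)
        show ?thesis unfolding eq
        proof (rule sum_abs_le)
          fix k assume k: "k \<in> {1..K}"
          have a: "\<bar>v (Outer k)\<bar> \<le> \<gamma> + D" using Dk[OF k] wo[OF k] by linarith
          have b1: "\<bar>cnn_fk \<sigma> d1 d2 L ?M ?k v k x\<bar> \<le> C" by (rule fk_bound[OF sb C1 L1])
          have b2: "\<bar>cnn_fk \<sigma> d1 d2 L ?M ?k w k x\<bar> \<le> C" by (rule fk_bound[OF sb C1 L1])
          have "\<bar>v (Outer k) * cnn_fk \<sigma> d1 d2 L ?M ?k v k x\<bar> \<le> (\<gamma> + D) * C"
            unfolding abs_mult using a b1 by (intro mult_mono) auto
          moreover have "\<bar>w (Outer k) * cnn_fk \<sigma> d1 d2 L ?M ?k w k x\<bar> \<le> \<gamma> * C"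
            unfolding abs_mult using wo[OF k] b2 by (intro mult_mono) auto
          ultimately show "\<bar>v (Outer k) * cnn_fk \<sigma> d1 d2 L ?M ?k v k x - w (Outer k) * cnn_fk \<sigma> d1 d2 L ?M ?k w k x\<bar>
              \<le> C * (2*\<gamma> + D)" by (simp add: algebra_simps)
        next
          show "real K \<le> real K" by simp
          show "0 \<le> C * (2*\<gamma> + D)" using C1 hy D0 by simp
        qed
      qed
      define S where "S = (1 / real n) * (\<Sum>j\<in>{1..n}. \<bar>Y j - cnn_f \<sigma> d1 d2 L ?M ?k K w (X j)\<bar>)"
      have S0: "S \<ge> 0" unfolding S_def by (simp add: sum_nonneg)
      have SB: "S \<le> s + real K * C * (2*\<gamma> + 2* s)"
      proof -
        have "(\<Sum>j\<in>{1..n}. \<bar>Y j - cnn_f \<sigma> d1 d2 L ?M ?k K w (X j)\<bar>) \<le>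
              (\<Sum>j\<in>{1..n}. \<bar>Y j - cnn_f \<sigma> d1 d2 L ?M ?k K v (X j)\<bar> + real K * (C * (2*\<gamma> + D)))"
        proof (rule sum_mono)
          fix j
          show "\<bar>Y j - cnn_f \<sigma> d1 d2 L ?M ?k K w (X j)\<bar> \<le> \<bar>Y j - cnn_f \<sigma> d1 d2 L ?M ?k K v (X j)\<bar> + real K * (C * (2*\<gamma> + D))"
            using fvw[of "X j"] by linarith
        qed
        then have "S \<le> (1 / real n) * ((\<Sum>j\<in>{1..n}. \<bar>Y j - cnn_f \<sigma> d1 d2 L ?M ?k K v (X j)\<bar>) + real n * (real K * (C * (2*\<gamma> + D))))"
          unfolding S_def sum.distrib by (intro mult_left_mono) auto
        also have "\<dots> = (1 / real n) * (\<Sum>j\<in>{1..n}. \<bar>Y j - cnn_f \<sigma> d1 d2 L ?M ?k K v (X j)\<bar>) + real K * (C * (2*\<gamma> + D))"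
          using hn by (simp add: distrib_left)
        finally have "S \<le> (1 / real n) * (\<Sum>j\<in>{1..n}. \<bar>Y j - cnn_f \<sigma> d1 d2 L ?M ?k K v (X j)\<bar>) + real K * (C * (2*\<gamma> + D))" .
        also have "\<dots> \<le> s + real K * (C * (2*\<gamma> + 2* s))"
          using meanv D2 K1 C1 by (intro add_mono mult_left_mono) auto
        finally show ?thesis by (simp add: algebra_simps)
      qed
      define \<Lambda> where "\<Lambda> = C + \<gamma>*(G*B)^L"
      define Mi where "Mi = \<Lambda> * (2*S + \<Lambda>) + 3*c4*\<gamma>"
      have L0: "\<Lambda> \<ge> 0" unfolding \<Lambda>_def using C1 hy G1 hB by simp
      have der: "\<bar>deriv (\<lambda>z. ?F (w(i:=z))) (w i)\<bar> \<le> Mi" if i: "i \<in> ?I" for i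
      proof (rule deriv_bound[OF F_diff[OF sigma_diff]])
        fix z assume dz: "\<bar>z - w i\<bar> \<le> 1"
        have fd: "\<bar>cnn_f \<sigma> d1 d2 L ?M ?k K (w(i:=z)) (X j) - cnn_f \<sigma> d1 d2 L ?M ?k K w (X j)\<bar> \<le> \<Lambda> * \<bar>z - w i\<bar>"
          if j: "j \<in> {1..n}" for j
          unfolding \<Lambda>_def
          by (rule f_lip[of \<sigma> C' C d1 d2 "X j" ?M A2 ?k A1 K L w B \<gamma> z i G, OF slip sb C1 xb[OF j] Mb kb wb wo _ hB dz G1 G2 kL L1])
            (use hy in auto)
        define A where "A = (1 / real n) * (\<Sum>j\<in>{1..n}. \<bar>Y j - cnn_f \<sigma> d1 d2 L ?M ?k K (w(i:=z)) (X j)\<bar>^2)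
            - (1 / real n) * (\<Sum>j\<in>{1..n}. \<bar>Y j - cnn_f \<sigma> d1 d2 L ?M ?k K w (X j)\<bar>^2)"
        define Bp where "Bp = (\<Sum>k\<in>{1..K}. ((w(i:=z)) (Outer k))^2) - (\<Sum>k\<in>{1..K}. (w (Outer k))^2)"
        have l: "\<bar>A\<bar> \<le> \<Lambda> * \<bar>z - w i\<bar> * (2 * S + \<Lambda>)"
          unfolding S_def A_def by (rule loss_diff[OF hn fd dz _ L0]) auto
        have p: "\<bar>Bp\<bar> \<le> 3*\<gamma>*\<bar>z - w i\<bar>"
          unfolding Bp_def by (rule penalty_diff[OF wo hy dz])
        have eq: "?F (w(i:=z)) - ?F (w(i := w i)) = A + c4 * Bp"
          unfolding Fn_def A_def Bp_def by (simp add: algebra_simps)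
        have "\<bar>?F (w(i:=z)) - ?F (w(i := w i))\<bar> \<le> \<Lambda> * \<bar>z - w i\<bar> * (2 * S + \<Lambda>) + c4 * (3*\<gamma>*\<bar>z - w i\<bar>)"
        proof -
          have t: "\<bar>A + c4 * Bp\<bar> \<le> \<bar>A\<bar> + \<bar>c4 * Bp\<bar>" by (rule abs_triangle_ineq)
          have "\<bar>c4 * Bp\<bar> = c4 * \<bar>Bp\<bar>" using c4_pos by (simp add: abs_mult)
          moreover have "c4 * \<bar>Bp\<bar> \<le> c4 * (3*\<gamma>*\<bar>z - w i\<bar>)" using c4_pos p by (intro mult_left_mono) auto
          ultimately show ?thesis unfolding eq using t l by linarith
        qed
        also have "\<dots> = Mi * \<bar>z - w i\<bar>" by (simp add: Mi_def algebra_simps)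
        finally show "\<bar>?F (w(i:=z)) - ?F (w(i := w i))\<bar> \<le> Mi * \<bar>z - w i\<bar>" .
      qed
      define Mb where "Mb = real K * s * \<gamma>^2 * (B^L)^2 * Q"
      have Mi_le: "Mi \<le> Mb"
      proof -
        have "(G*B)^L = G^L * B^L" by (simp add: power_mult_distrib)
        then show ?thesis unfolding Mi_def Mb_def \<Lambda>_def Q_def H_def
          using arith_main[OF C1 _ _ hy s1 K1 _ S0 SB, of "G^L" "B^L" c4] G1 hB c4_pos
          by (simp add: one_le_power)
      qed
      have Mb0: "Mb \<ge> 0" unfolding Mb_def using K1 s1 Q0 by simp
      have "grad_norm ?F ?I w \<le> sqrt (\<Sum>i\<in>?I. Mb^2)"
        unfolding grad_norm_def
      proof (rule real_sqrt_le_mono, rule sum_mono)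
        fix i assume i: "i \<in> ?I"
        have "\<bar>deriv (\<lambda>z. ?F (w(i:=z))) (w i)\<bar> \<le> Mb" using der[OF i] Mi_le by linarith
        then show "(deriv (\<lambda>z. ?F (w(i:=z))) (w i))^2 \<le> Mb^2"
          using power_mono[OF \<open>\<bar>deriv (\<lambda>z. ?F (w(i:=z))) (w i)\<bar> \<le> Mb\<close> abs_ge_zero, of 2] by simp
      qed
      also have "\<dots> = sqrt (real (card ?I)) * Mb" using Mb0 by (simp add: real_sqrt_mult)
      also have "\<dots> \<le> sqrt (real P * real K) * Mb"
        using cI Mb0 by (intro mult_right_mono real_sqrt_le_mono) (auto simp flip: of_nat_mult)
      also have "\<dots> = c8 * real K powr (3/2) * B ^ (2 * L) * \<gamma>^2 * s"
      proof -
        have k0: "real K > 0" using K1 by simp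
        have "real K powr (3/2) = real K powr 1 * real K powr (1/2)" unfolding powr_add[symmetric] by simp
        also have "\<dots> = real K * sqrt (real K)" using k0 by (simp add: powr_half_sqrt)
        finally have kp: "real K powr (3/2) = real K * sqrt (real K)" .
        have bp: "B ^ (2 * L) = (B^L)^2" by (simp add: power_mult mult.commute)
        show ?thesis unfolding kp bp Mb_def c8_def by (simp add: real_sqrt_mult algebra_simps)
      qed
      finally show ?thesis unfolding s_def .
    qed
  qed
qed

end
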